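(* Let $G$ be a $3^*$-connected cubic graph of order $2n$ with $n\geq 4$. Then $\chi'_{[n-1]}(G)=4$.
   Context: All graphs are finite, simple (no loops, no parallel edges), connected and cubic. A bridgeless cubic graph $G$ is $3^*$-connected if there exist two vertices $a,b\in V(G)$ and three internally vertex-disjoint $a$–$b$ paths $Q_1,Q_2,Q_3$ with $V(G)=V(Q_1)\cup V(Q_2)\cup V(Q_3)$. For a positive integer $k$, a $[k]$-matching of $G$ is a matching of $G$ with exactly $k$ edges. The excessive $[k]$-index $\chi'_{[k]}(G)$ is the minimum number of $[k]$-matchings of $G$ whose union is $E(G)$; if some edge of $G$ lies in no $[k]$-matching, one sets $\chi'_{[k]}(G)=\infty$. *)

theory Defs
  imports Main "HOL-Library.Extended_Nat"
begin

definition simple_graph :: "'a set \<Rightarrow> 'a set set \<Rightarrow> bool" where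
  "simple_graph V E \<longleftrightarrow> finite V \<and>
     (\<forall>e\<in>E. \<exists>u v. e = {u, v} \<and> u \<noteq> v \<and> u \<in> V \<and> v \<in> V)"

definition degree :: "'a set set \<Rightarrow> 'a \<Rightarrow> nat" where
  "degree E v = card {e\<in>E. v \<in> e}"

definition cubic :: "'a set \<Rightarrow> 'a set set \<Rightarrow> bool" where
  "cubic V E \<longleftrightarrow> simple_graph V E \<and> (\<forall>v\<in>V. degree E v = 3)"

definition connected_graph :: "'a set \<Rightarrow> 'a set set \<Rightarrow> bool" where
  "connected_graph V E \<longleftrightarrow> (\<forall>u\<in>V. \<forall>v\<in>V. (\<lambda>x y. {x, y} \<in> E)\<^sup>*\<^sup>* u v)"

definition bridgeless :: "'a set \<Rightarrow> 'a set set \<Rightarrow> bool" where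
  "bridgeless V E \<longleftrightarrow> (\<forall>e\<in>E. connected_graph V (E - {e}))"

definition is_path :: "'a set set \<Rightarrow> 'a list \<Rightarrow> 'a \<Rightarrow> 'a \<Rightarrow> bool" where
  "is_path E xs a b \<longleftrightarrow> xs \<noteq> [] \<and> hd xs = a \<and> last xs = b \<and> distinct xs \<and>
     (\<forall>i. Suc i < length xs \<longrightarrow> {xs ! i, xs ! Suc i} \<in> E)"

definition three_star_connected :: "'a set \<Rightarrow> 'a set set \<Rightarrow> bool" where
  "three_star_connected V E \<longleftrightarrow> bridgeless V E \<and>
     (\<exists>a b Q1 Q2 Q3. a \<in> V \<and> b \<in> V \<and> a \<noteq> b \<and>
        is_path E Q1 a b \<and> is_path E Q2 a b \<and> is_path E Q3 a b \<and>
        Q1 \<noteq> Q2 \<and> Q1 \<noteq> Q3 \<and> Q2 \<noteq> Q3 \<and>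
        set Q1 \<inter> set Q2 = {a, b} \<and> set Q1 \<inter> set Q3 = {a, b} \<and> set Q2 \<inter> set Q3 = {a, b} \<and>
        V = set Q1 \<union> set Q2 \<union> set Q3)"

definition matching :: "'a set set \<Rightarrow> 'a set set \<Rightarrow> bool" where
  "matching E M \<longleftrightarrow> M \<subseteq> E \<and> (\<forall>e1\<in>M. \<forall>e2\<in>M. e1 \<noteq> e2 \<longrightarrow> e1 \<inter> e2 = {})"

definition k_matching :: "'a set set \<Rightarrow> nat \<Rightarrow> 'a set set \<Rightarrow> bool" where
  "k_matching E k M \<longleftrightarrow> matching E M \<and> card M = k"

text \<open>Excessive [k]-index: minimum number of [k]-matchings covering E; infinity
  (Inf of the empty set in enat) if no such cover exists.\<close>
definition excessive_index :: "'a set set \<Rightarrow> nat \<Rightarrow> enat" where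
  "excessive_index E k = Inf {enat (card S) | S. finite S \<and> (\<forall>M\<in>S. k_matching E k M) \<and> \<Union>S = E}"

end

theory Submission
  imports Defs
begin


definition ev :: "nat \<Rightarrow> nat set" where "ev l = {j. j < l \<and> even j}"
definition od :: "nat \<Rightarrow> nat set" where "od l = {j. j < l \<and> odd j}"

lemma card_ev: "card (ev l) = (l + 1) div 2"
proof (induction l)
  case 0 then show ?case by (simp add: ev_def)
next
  case (Suc l)
  have "ev (Suc l) = (if even l then insert l (ev l) else ev l)"
    by (auto simp: ev_def less_Suc_eq)
  moreover have "finite (ev l)" "l \<notin> ev l" by (auto simp: ev_def less_Suc_eq)
  ultimately show ?case using Suc by auto
qed

lemma card_od: "card (od l) = l div 2"
proof (induction l)
  case 0 then show ?case by (simp add: od_def)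
next
  case (Suc l)
  have "od (Suc l) = (if odd l then insert l (od l) else od l)"
    by (auto simp: od_def less_Suc_eq)
  moreover have "finite (od l)" "l \<notin> od l" by (auto simp: od_def less_Suc_eq)
  ultimately show ?case using Suc by auto
qed

lemma fin_ev[simp]: "finite (ev l)" and fin_od[simp]: "finite (od l)"
  by (auto simp: ev_def od_def)

definition okset :: "nat \<Rightarrow> nat set \<Rightarrow> bool" where
 "okset l S \<longleftrightarrow> S \<subseteq> {..<l} \<and> (\<forall>j\<in>S. Suc j \<notin> S)"

definition okm :: "nat \<Rightarrow> nat \<Rightarrow> nat \<Rightarrow> nat \<Rightarrow> nat set \<Rightarrow> nat set \<Rightarrow> nat set \<Rightarrow> bool" where
 "okm l1 l2 l3 k A B C \<longleftrightarrow> okset l1 A \<and> okset l2 B \<and> okset l3 C \<and> card A + card B + card C = k \<and>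
   \<not>(0\<in>A \<and> 0\<in>B) \<and> \<not>(0\<in>A \<and> 0\<in>C) \<and> \<not>(0\<in>B \<and> 0\<in>C) \<and>
   \<not>(l1-1\<in>A \<and> l2-1\<in>B) \<and> \<not>(l1-1\<in>A \<and> l3-1\<in>C) \<and> \<not>(l2-1\<in>B \<and> l3-1\<in>C)"

definition scheme :: "nat \<Rightarrow> nat \<Rightarrow> nat \<Rightarrow> nat \<Rightarrow> bool" where
 "scheme l1 l2 l3 k \<longleftrightarrow> (\<exists>A1 B1 C1 A2 B2 C2 A3 B3 C3.
    okm l1 l2 l3 k A1 B1 C1 \<and> okm l1 l2 l3 k A2 B2 C2 \<and> okm l1 l2 l3 k A3 B3 C3 \<and>
    A1 \<union> A2 \<union> A3 = {..<l1} \<and> B1 \<union> B2 \<union> B3 = {..<l2} \<and> C1 \<union> C2 \<union> C3 = {..<l3})"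

lemma okm_swap12: "okm l1 l2 l3 k A B C \<Longrightarrow> okm l2 l1 l3 k B A C"
  unfolding okm_def by auto
lemma okm_swap23: "okm l1 l2 l3 k A B C \<Longrightarrow> okm l1 l3 l2 k A C B"
  unfolding okm_def by auto

lemma scheme_swap12: "scheme l1 l2 l3 k \<Longrightarrow> scheme l2 l1 l3 k"
  unfolding scheme_def by (metis okm_swap12)
lemma scheme_swap23: "scheme l1 l2 l3 k \<Longrightarrow> scheme l1 l3 l2 k"
  unfolding scheme_def by (metis okm_swap23)

lemma okset_ev[simp]: "okset l (ev l)" and okset_od[simp]: "okset l (od l)"
  by (auto simp: okset_def ev_def od_def)

lemma okset_diff: "okset l S \<Longrightarrow> okset l (S - X)"
  by (auto simp: okset_def)

lemma mem_ev[simp]: "j \<in> ev l \<longleftrightarrow> j < l \<and> even j" and mem_od[simp]: "j \<in> od l \<longleftrightarrow> j < l \<and> odd j"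
  by (auto simp: ev_def od_def)

lemma card_del: "x \<in> S \<Longrightarrow> finite S \<Longrightarrow> card (S - {x}) = card S - 1"
  by simp

lemma caseA1:
  assumes "l1 = 2*p1+1" "l2 = 2*p2+1" "l3 = 2*p3+1" "p1\<ge>1" "p2\<ge>1" "p3\<ge>1"
  shows "scheme l1 l2 l3 (p1+p2+p3)"
  unfolding scheme_def
proof (intro exI conjI)
  show "okm l1 l2 l3 (p1+p2+p3) (ev l1) (od l2 - {1}) (od l3)"
    using assms unfolding okm_def
    by (auto simp: okset_diff card_ev card_od card_del)
  show "okm l1 l2 l3 (p1+p2+p3) (od l1) (ev l2) (od l3 - {1})"
    using assms unfolding okm_def
    by (auto simp: okset_diff card_ev card_od card_del)
  show "okm l1 l2 l3 (p1+p2+p3) (od l1 - {1}) (od l2) (ev l3)"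
    using assms unfolding okm_def
    by (auto simp: okset_diff card_ev card_od card_del)
qed (auto)


lemma caseA2:
  assumes "l1 = 1" "l2 = 2*p2+1" "l3 = 2*p3+1" "p2\<ge>1" "p3\<ge>2"
  shows "scheme l1 l2 l3 (p2+p3)"
  unfolding scheme_def
proof (intro exI conjI)
  show "okm l1 l2 l3 (p2+p3) (ev l1) (od l2) (od l3 - {3})"
    using assms unfolding okm_def
    by (auto simp: okset_diff card_ev card_od card_del)
  show "okm l1 l2 l3 (p2+p3) (od l1) (ev l2) (od l3 - {1})"
    using assms unfolding okm_def
    by (auto simp: okset_diff card_ev card_od card_del)
  show "okm l1 l2 l3 (p2+p3) (od l1) (od l2 - {1}) (ev l3)"
    using assms unfolding okm_def
    by (auto simp: okset_diff card_ev card_od card_del)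
qed (use assms in auto)

lemma caseBi:
  assumes "l1 = 2*p1+1" "l2 = 2*p2" "l3 = 2*p3" "p1\<ge>1" "p2\<ge>1" "p3\<ge>2"
  shows "scheme l1 l2 l3 (p1+p2+p3-1)"
  unfolding scheme_def
proof (intro exI conjI)
  show "okm l1 l2 l3 (p1+p2+p3-1) (ev l1) (od l2 - {l2-1}) (od l3 - {l3-1})"
    using assms unfolding okm_def
    by (auto simp: okset_diff card_ev card_od card_del)
  show "okm l1 l2 l3 (p1+p2+p3-1) (od l1) (ev l2) (od l3 - {1})"
    using assms unfolding okm_def
    by (auto simp: okset_diff card_ev card_od card_del)
  show "okm l1 l2 l3 (p1+p2+p3-1) (od l1 - {1}) (od l2) (ev l3)"
    using assms unfolding okm_def
    by (auto simp: okset_diff card_ev card_od card_del)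
qed (use assms in auto)

lemma caseBii:
  assumes "l1 = 2*p1+1" "l2 = 2" "l3 = 2" "p1\<ge>2"
  shows "scheme l1 l2 l3 (p1+1)"
  unfolding scheme_def
proof (intro exI conjI)
  show "okm l1 l2 l3 (p1+1) (ev l1) {} {}"
    using assms unfolding okm_def
    by (auto simp: okset_def card_ev card_od card_del)
  show "okm l1 l2 l3 (p1+1) (od l1 - {3}) (ev l2) (od l3)"
    using assms unfolding okm_def
    by (auto simp: okset_diff card_ev card_od card_del)
  show "okm l1 l2 l3 (p1+1) (od l1 - {1}) (od l2) (ev l3)"
    using assms unfolding okm_def
    by (auto simp: okset_diff card_ev card_od card_del)
qed (use assms in auto)

lemma caseBiii:
  assumes "l1 = 1" "l2 = 2*p2" "l3 = 2*p3" "p2\<ge>2" "p3\<ge>2"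
  shows "scheme l1 l2 l3 (p2+p3-1)"
  unfolding scheme_def
proof (intro exI conjI)
  show "okm l1 l2 l3 (p2+p3-1) (ev l1) (ev l2 - {0}) (ev l3 - {0})"
    using assms unfolding okm_def
    by (auto simp: okset_diff card_ev card_od card_del)
  show "okm l1 l2 l3 (p2+p3-1) (od l1) (ev l2 - {2}) (od l3)"
    using assms unfolding okm_def
    by (auto simp: okset_diff card_ev card_od card_del)
  show "okm l1 l2 l3 (p2+p3-1) (od l1) (od l2) (ev l3 - {2})"
    using assms unfolding okm_def
    by (auto simp: okset_diff card_ev card_od card_del)
qed (use assms in auto)

lemma caseBiv:
  assumes "l1 = 1" "l2 = 2" "l3 = 2*p3" "p3\<ge>3"
  shows "scheme l1 l2 l3 p3"
  unfolding scheme_def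
proof (intro exI conjI)
  show "okm l1 l2 l3 p3 (ev l1) {} (ev l3 - {0})"
    using assms unfolding okm_def
    by (auto simp: okset_diff okset_def card_ev card_od card_del)
  show "okm l1 l2 l3 p3 (od l1) (ev l2) (od l3 - {3})"
    using assms unfolding okm_def
    by (auto simp: okset_diff card_ev card_od card_del)
  have c: "card (od l3 - {1} - {l3-1}) = p3 - 2"
    using assms by (simp add: card_od)
  show "okm l1 l2 l3 p3 (od l1) (od l2) (insert 0 (od l3 - {1} - {l3-1}))"
    using assms c unfolding okm_def
    by (auto simp: okset_def card_ev card_od card_del)
qed (use assms in auto)


lemma arith_core:
  assumes "odd l1" "l2 \<le> l3" "odd l2 \<longrightarrow> l1 \<le> l2" "l1 \<ge> 1" "l2 \<ge> 1" "l3 \<ge> 1"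
    "l1+l2+l3 = 2*n+1" "n \<ge> 4" "\<not>(l1=1\<and>l2=1)" "\<not>(l1=1\<and>l3=1)" "\<not>(l2=1\<and>l3=1)"
  shows "scheme l1 l2 l3 (n-1)"
proof -
  define p1 where "p1 = l1 div 2"
  define p2 where "p2 = l2 div 2"
  define p3 where "p3 = l3 div 2"
  have l1: "l1 = 2*p1+1" using assms(1) unfolding p1_def by presburger
  have s: "l1+l2+l3 = 2*n+1" "n \<ge> 4" "l2 \<le> l3" using assms by auto
  show ?thesis
  proof (cases "odd l2")
    case True
    then have o3: "odd l3" using assms(1,7) by presburger
    have l2: "l2 = 2*p2+1" using True unfolding p2_def by presburger
    have l3: "l3 = 2*p3+1" using o3 unfolding p3_def by presburger
    have le: "l1 \<le> l2" using assms(3) True by simp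
    show ?thesis
    proof (cases "l1 = 1")
      case True
      have "p2 \<noteq> 0" using assms(9) True l2 by auto
      moreover have "p3 \<ge> 2" using s l2 l3 True by linarith
      ultimately have "scheme l1 l2 l3 (p2+p3)"
        using caseA2[OF True l2 l3] by simp
      moreover have "p2+p3 = n-1" using s True l2 l3 by linarith
      ultimately show ?thesis by simp
    next
      case False
      have "p1 \<noteq> 0" using False l1 by auto
      then have "p1 \<ge> 1" "p2 \<ge> 1" "p3 \<ge> 1" using le s l1 l2 l3 by linarith+
      then have "scheme l1 l2 l3 (p1+p2+p3)"
        using caseA1[OF l1 l2 l3] by simp
      moreover have "p1+p2+p3 = n-1" using s l1 l2 l3 by linarith
      ultimately show ?thesis by simp
    qed
  next
    case False
    then have e3: "even l3" using assms(1,7) by presburger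
    have l2: "l2 = 2*p2" using False unfolding p2_def by presburger
    have l3: "l3 = 2*p3" using e3 unfolding p3_def by presburger
    have "p2 \<noteq> 0" "p3 \<noteq> 0" using assms(5,6) l2 l3 by auto
    then have p23: "p2 \<ge> 1" "p3 \<ge> 1" by auto
    show ?thesis
    proof (cases "l1 = 1")
      case True
      show ?thesis
      proof (cases "l2 = 2")
        case True2: True
        have "p3 \<ge> 3" using s True True2 l3 by linarith
        then have "scheme l1 l2 l3 p3"
          using caseBiv[OF True True2 l3] by simp
        moreover have "p3 = n-1" using s True True2 l3 by linarith
        ultimately show ?thesis by simp
      next
        case False2: False
        have "p2 \<ge> 2" "p3 \<ge> 2" using False2 p23 l2 l3 s by linarith+
        then have "scheme l1 l2 l3 (p2+p3-1)"
          using caseBiii[OF True l2 l3] by simp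
        moreover have "p2+p3-1 = n-1" using s True l2 l3 by linarith
        ultimately show ?thesis by simp
      qed
    next
      case False1: False
      have "p1 \<noteq> 0" using False1 l1 by auto
      show ?thesis
      proof (cases "l3 = 2")
        case True
        then have t2: "l2 = 2" using s l2 p23 by linarith
        have "p1 \<ge> 2" using s True t2 l1 by linarith
        then have "scheme l1 l2 l3 (p1+1)"
          using caseBii[OF l1 t2 True] by simp
        moreover have "p1+1 = n-1" using s True t2 l1 by linarith
        ultimately show ?thesis by simp
      next
        case False
        have "p1 \<ge> 1" "p3 \<ge> 2" using \<open>p1 \<noteq> 0\<close> False l3 p23 by linarith+
        then have "scheme l1 l2 l3 (p1+p2+p3-1)"
          using caseBi[OF l1 l2 l3] p23 by simp
        moreover have "p1+p2+p3-1 = n-1" using s l1 l2 l3 by linarith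
        ultimately show ?thesis by simp
      qed
    qed
  qed
qed

lemma arith_core2:
  assumes "odd l1" "odd l2 \<longrightarrow> l1 \<le> l2 \<and> l1 \<le> l3" "l1 \<ge> 1" "l2 \<ge> 1" "l3 \<ge> 1"
    "l1+l2+l3 = 2*n+1" "n \<ge> 4" "\<not>(l1=1\<and>l2=1)" "\<not>(l1=1\<and>l3=1)" "\<not>(l2=1\<and>l3=1)"
  shows "scheme l1 l2 l3 (n-1)"
proof (cases "l2 \<le> l3")
  case True
  have "odd l2 \<longrightarrow> l1 \<le> l2" using assms(2) by simp
  then show ?thesis using arith_core[of l1 l2 l3 n] assms True by simp
next
  case False
  have o: "odd l3 \<longrightarrow> odd l2" using assms(1,6) by presburger
  have "odd l3 \<longrightarrow> l1 \<le> l3" using assms(2) o by simp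
  moreover have "l3 \<le> l2" using False by simp
  moreover have "l1+l3+l2 = 2*n+1" using assms(6) by simp
  ultimately have "scheme l1 l3 l2 (n-1)" using arith_core[of l1 l3 l2 n] assms by simp
  then show ?thesis by (rule scheme_swap23)
qed

lemma arith_main:
  assumes "l1 \<ge> 1" "l2 \<ge> 1" "l3 \<ge> 1"
    "l1+l2+l3 = 2*n+1" "n \<ge> 4" "\<not>(l1=1\<and>l2=1)" "\<not>(l1=1\<and>l3=1)" "\<not>(l2=1\<and>l3=1)"
  shows "scheme l1 l2 l3 (n-1)"
proof -
  have s1: "l2+l1+l3 = 2*n+1" "l3+l2+l1 = 2*n+1" using assms(4) by simp_all
  have A: "scheme l2 l1 l3 (n-1) \<Longrightarrow> ?thesis" by (rule scheme_swap12)
  have B: "scheme l3 l2 l1 (n-1) \<Longrightarrow> ?thesis" by (metis scheme_swap12 scheme_swap23)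
  have c1: "odd l1 \<or> odd l2 \<or> odd l3" using assms(4) by presburger
  have c2: "odd l1 \<Longrightarrow> odd l2 \<Longrightarrow> odd l3" using assms(4) by presburger
  have c3: "odd l1 \<Longrightarrow> odd l3 \<Longrightarrow> odd l2" using assms(4) by presburger
  have c4: "odd l2 \<Longrightarrow> odd l3 \<Longrightarrow> odd l1" using assms(4) by presburger
  show ?thesis
  proof (cases "odd l1 \<and> odd l2 \<and> odd l3")
    case True
    consider "l1 \<le> l2" "l1 \<le> l3" | "l2 \<le> l1" "l2 \<le> l3" | "l3 \<le> l1" "l3 \<le> l2" by linarith
    then show ?thesis
    proof cases
      case 1 then show ?thesis using arith_core2[of l1 l2 l3 n] assms True by simp
    next
      case 2
      then have "scheme l2 l1 l3 (n-1)"
        by (intro arith_core2) (use assms True s1 in auto)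
      then show ?thesis by (rule A)
    next
      case 3
      then have "scheme l3 l2 l1 (n-1)"
        by (intro arith_core2) (use assms True s1 in auto)
      then show ?thesis by (rule B)
    qed
  next
    case False
    from c1 show ?thesis
    proof (elim disjE)
      assume o: "odd l1"
      then have "\<not> odd l2" using False c2 by blast
      then show ?thesis using arith_core2[of l1 l2 l3 n] assms o by simp
    next
      assume o: "odd l2"
      then have "\<not> odd l1" using False c2 by blast
      then have "scheme l2 l1 l3 (n-1)"
        by (intro arith_core2) (use assms o s1 in auto)
      then show ?thesis by (rule A)
    next
      assume o: "odd l3"
      then have "\<not> odd l2" using False c3 c4 by blast
      then have "scheme l3 l2 l1 (n-1)"
        by (intro arith_core2) (use assms o s1 in auto)
      then show ?thesis by (rule B)
    qed
  qed
qed




definition pe :: "'a list \<Rightarrow> nat \<Rightarrow> 'a set" where "pe Q j = {Q!j, Q!Suc j}"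

definition apath :: "'a \<Rightarrow> 'a \<Rightarrow> 'a list \<Rightarrow> bool" where
  "apath a b Q \<longleftrightarrow> Q \<noteq> [] \<and> hd Q = a \<and> last Q = b \<and> distinct Q"

definition pdisj :: "'a set set \<Rightarrow> bool" where
  "pdisj M \<longleftrightarrow> (\<forall>e1\<in>M. \<forall>e2\<in>M. e1 \<noteq> e2 \<longrightarrow> e1 \<inter> e2 = {})"

context
  fixes a b :: 'a and Q :: "'a list"
  assumes ap: "apath a b Q" and ab: "a \<noteq> b"
begin

lemma ap_len: "length Q \<ge> 2"
proof -
  have "Q \<noteq> []" "hd Q = a" "last Q = b" using ap by (auto simp: apath_def)
  then obtain x xs where Q: "Q = x # xs" by (cases Q) auto
  show ?thesis
  proof (cases xs)
    case Nil then show ?thesis using Q \<open>hd Q = a\<close> \<open>last Q = b\<close> ab by simp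
  next
    case (Cons y ys) then show ?thesis using Q by simp
  qed
qed

lemma ap_dist: "distinct Q" using ap by (auto simp: apath_def)

lemma ap_0: "Q!0 = a"
  using ap by (auto simp: apath_def hd_conv_nth)

lemma ap_last: "Q!(length Q - 1) = b"
  using ap by (auto simp: apath_def last_conv_nth)

lemma ap_a: "j < length Q \<Longrightarrow> Q!j = a \<longleftrightarrow> j = 0"
proof -
  assume j: "j < length Q"
  have "0 < length Q" using j by (cases Q) auto
  then show ?thesis using j ap_0 ap_dist nth_eq_iff_index_eq[of Q j 0] by (metis (no_types, lifting))
qed

lemma ap_b: "j < length Q \<Longrightarrow> Q!j = b \<longleftrightarrow> j = length Q - 1"
proof -
  assume j: "j < length Q"
  have "length Q - 1 < length Q" using ap_len by simp
  then show ?thesis using j ap_last ap_dist nth_eq_iff_index_eq[of Q j "length Q - 1"] by auto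
qed

lemma pe_inj: "j < length Q - 1 \<Longrightarrow> j' < length Q - 1 \<Longrightarrow> pe Q j = pe Q j' \<Longrightarrow> j = j'"
  using ap_dist by (auto simp: pe_def doubleton_eq_iff nth_eq_iff_index_eq)

lemma pe_disj: "j < length Q - 1 \<Longrightarrow> j' < length Q - 1 \<Longrightarrow> j \<noteq> j' \<Longrightarrow> Suc j \<noteq> j' \<Longrightarrow> j \<noteq> Suc j'
   \<Longrightarrow> pe Q j \<inter> pe Q j' = {}"
  using ap_dist by (auto simp: pe_def nth_eq_iff_index_eq)

lemma pe_a: "j < length Q - 1 \<Longrightarrow> a \<in> pe Q j \<Longrightarrow> j = 0"
proof -
  assume j: "j < length Q - 1" and "a \<in> pe Q j"
  then have "Q!j = a \<or> Q!Suc j = a" by (auto simp: pe_def)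
  then show ?thesis using j ap_a[of j] ap_a[of "Suc j"] by auto
qed

lemma pe_b: "j < length Q - 1 \<Longrightarrow> b \<in> pe Q j \<Longrightarrow> j = length Q - 2"
proof -
  assume j: "j < length Q - 1" and "b \<in> pe Q j"
  then have "Q!j = b \<or> Q!Suc j = b" by (auto simp: pe_def)
  then show ?thesis using j ap_b[of j] ap_b[of "Suc j"] by auto
qed

lemma pe_sub: "j < length Q - 1 \<Longrightarrow> pe Q j \<subseteq> set Q"
  by (auto simp: pe_def)

lemma pe_a0: "a \<in> pe Q 0" using ap_0 by (simp add: pe_def)

lemma pe_bl: "b \<in> pe Q (length Q - 2)"
  using ap_last ap_len by (simp add: pe_def Suc_diff_Suc numeral_2_eq_2)

lemma len2: "length Q = 2 \<Longrightarrow> Q = [a,b]"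
proof -
  assume "length Q = 2"
  then obtain x y where "Q = [x,y]"
    by (metis One_nat_def Suc_1 length_0_conv length_Suc_conv)
  then show ?thesis using ap by (simp add: apath_def)
qed


lemma pe_ab: "j < length Q - 1 \<Longrightarrow> pe Q j \<subseteq> {a,b} \<Longrightarrow> length Q = 2"
proof -
  assume j: "j < length Q - 1" and s: "pe Q j \<subseteq> {a,b}"
  have "Q!Suc j \<noteq> a" using ap_a[of "Suc j"] j by auto
  then have "Q!Suc j = b" using s by (auto simp: pe_def)
  then have 1: "Suc j = length Q - 1" using ap_b[of "Suc j"] j by auto
  have "Q!j \<noteq> b" using ap_b[of j] j by auto
  then have "Q!j = a" using s by (auto simp: pe_def)
  then have "j = 0" using ap_a[of j] j by auto
  then show ?thesis using 1 by simp
qed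

end

lemma cross_disj:
  assumes apQ: "apath a b Q" and apR: "apath a b R" and ab: "a \<noteq> b"
    and int: "set Q \<inter> set R = {a,b}"
    and j: "j < length Q - 1" and j': "j' < length R - 1"
    and c0: "\<not>(j=0 \<and> j'=0)" and c1: "\<not>(j = length Q - 2 \<and> j' = length R - 2)"
  shows "pe Q j \<inter> pe R j' = {}"
proof (rule ccontr)
  assume "pe Q j \<inter> pe R j' \<noteq> {}"
  then obtain x where x: "x \<in> pe Q j" "x \<in> pe R j'" by blast
  then have "x \<in> set Q \<inter> set R" using pe_sub[OF apQ ab j] pe_sub[OF apR ab j'] by blast
  then have "x = a \<or> x = b" using int by blast
  then show False
  proof
    assume "x = a"
    then show False using pe_a[OF apQ ab j] pe_a[OF apR ab j'] x c0 by auto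
  next
    assume "x = b"
    then show False using pe_b[OF apQ ab j] pe_b[OF apR ab j'] x c1 by auto
  qed
qed

lemma cross_neq:
  assumes apQ: "apath a b Q" and apR: "apath a b R" and ab: "a \<noteq> b"
    and int: "set Q \<inter> set R = {a,b}" and neq: "Q \<noteq> R"
    and j: "j < length Q - 1" and j': "j' < length R - 1"
  shows "pe Q j \<noteq> pe R j'"
proof
  assume eq: "pe Q j = pe R j'"
  have "pe Q j \<subseteq> {a,b}" using eq pe_sub[OF apQ ab j] pe_sub[OF apR ab j'] int by blast
  then have "length Q = 2" using pe_ab[OF apQ ab j] by simp
  then have "Q = [a,b]" using len2[OF apQ ab] by simp
  have "pe R j' \<subseteq> {a,b}" using eq pe_sub[OF apQ ab j] pe_sub[OF apR ab j'] int by blast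
  then have "length R = 2" using pe_ab[OF apR ab j'] by simp
  then have "R = [a,b]" using len2[OF apR ab] by simp
  then show False using \<open>Q = [a,b]\<close> neq by simp
qed

lemma pdisj_Un: "pdisj X \<Longrightarrow> pdisj Y \<Longrightarrow> (\<forall>x\<in>X. \<forall>y\<in>Y. x \<inter> y = {}) \<Longrightarrow> pdisj (X \<union> Y)"
  unfolding pdisj_def by blast

lemma pdisj_path:
  assumes apQ: "apath a b Q" and ab: "a \<noteq> b" and ok: "okset (length Q - 1) A"
  shows "pdisj (pe Q ` A)"
  unfolding pdisj_def
proof (intro ballI impI)
  fix e1 e2 assume "e1 \<in> pe Q ` A" "e2 \<in> pe Q ` A" "e1 \<noteq> e2"
  then obtain j j' where jj: "j \<in> A" "j' \<in> A" "e1 = pe Q j" "e2 = pe Q j'" "j \<noteq> j'" by auto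
  have "Suc j \<noteq> j'" "j \<noteq> Suc j'" using ok jj unfolding okset_def by auto
  moreover have "j < length Q - 1" "j' < length Q - 1" using ok jj unfolding okset_def by auto
  ultimately show "e1 \<inter> e2 = {}" using pe_disj[OF apQ ab] jj by simp
qed

lemma cross_img:
  assumes apQ: "apath a b Q" and apR: "apath a b R" and ab: "a \<noteq> b"
    and int: "set Q \<inter> set R = {a,b}"
    and A: "okset (length Q - 1) A" and B: "okset (length R - 1) B"
    and c0: "\<not>(0\<in>A \<and> 0\<in>B)" and c1: "\<not>(length Q - 1 - 1 \<in> A \<and> length R - 1 - 1 \<in> B)"
  shows "\<forall>x\<in>pe Q ` A. \<forall>y\<in>pe R ` B. x \<inter> y = {}"
proof (intro ballI)
  fix x y assume "x \<in> pe Q ` A" "y \<in> pe R ` B"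
  then obtain j j' where jj: "j \<in> A" "j' \<in> B" "x = pe Q j" "y = pe R j'" by auto
  have "j < length Q - 1" "j' < length R - 1" using A B jj unfolding okset_def by auto
  moreover have "\<not>(j=0 \<and> j'=0)" using c0 jj(1,2) by blast
  moreover have "\<not>(j = length Q - 2 \<and> j' = length R - 2)" using c1 jj
    by (metis diff_diff_left one_add_one)
  ultimately show "x \<inter> y = {}" using cross_disj[OF apQ apR ab int] jj by simp
qed

lemma card_path:
  assumes apQ: "apath a b Q" and ab: "a \<noteq> b" and A: "A \<subseteq> {..<length Q - 1}"
  shows "card (pe Q ` A) = card A"
proof (rule card_image)
  show "inj_on (pe Q) A" using pe_inj[OF apQ ab] A unfolding inj_on_def by blast
qed

locale theta =
  fixes a b :: 'a and Q1 Q2 Q3 :: "'a list"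
  assumes ab: "a \<noteq> b" and ap1: "apath a b Q1" and ap2: "apath a b Q2" and ap3: "apath a b Q3"
    and i12: "set Q1 \<inter> set Q2 = {a,b}" and i13: "set Q1 \<inter> set Q3 = {a,b}"
    and i23: "set Q2 \<inter> set Q3 = {a,b}"
    and n12: "Q1 \<noteq> Q2" and n13: "Q1 \<noteq> Q3" and n23: "Q2 \<noteq> Q3"
begin

definition MM :: "nat set \<Rightarrow> nat set \<Rightarrow> nat set \<Rightarrow> 'a set set" where
  "MM A B C = pe Q1 ` A \<union> pe Q2 ` B \<union> pe Q3 ` C"

lemma i21: "set Q2 \<inter> set Q1 = {a,b}" and i31: "set Q3 \<inter> set Q1 = {a,b}"
  and i32: "set Q3 \<inter> set Q2 = {a,b}" using i12 i13 i23 by auto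

lemma card_MM:
  assumes A: "A \<subseteq> {..<length Q1 - 1}" and B: "B \<subseteq> {..<length Q2 - 1}"
    and C: "C \<subseteq> {..<length Q3 - 1}"
  shows "card (MM A B C) = card A + card B + card C"
proof -
  have fA: "finite A" "finite B" "finite C" using A B C finite_subset by blast+
  have d12: "pe Q1 ` A \<inter> pe Q2 ` B = {}"
    using cross_neq[OF ap1 ap2 ab i12 n12] A B by blast
  have d13: "(pe Q1 ` A \<union> pe Q2 ` B) \<inter> pe Q3 ` C = {}"
    using cross_neq[OF ap1 ap3 ab i13 n13] cross_neq[OF ap2 ap3 ab i23 n23] A B C by blast
  have "card (MM A B C) = card (pe Q1 ` A \<union> pe Q2 ` B) + card (pe Q3 ` C)"
    unfolding MM_def using d13 fA by (simp add: card_Un_disjoint)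
  also have "\<dots> = card (pe Q1 ` A) + card (pe Q2 ` B) + card (pe Q3 ` C)"
    using d12 fA by (simp add: card_Un_disjoint)
  also have "\<dots> = card A + card B + card C"
    using card_path[OF ap1 ab A] card_path[OF ap2 ab B] card_path[OF ap3 ab C] by simp
  finally show ?thesis .
qed

lemma okm_MM:
  assumes "okm (length Q1 - 1) (length Q2 - 1) (length Q3 - 1) k A B C"
  shows "pdisj (MM A B C) \<and> card (MM A B C) = k"
proof
  have A: "okset (length Q1 - 1) A" and B: "okset (length Q2 - 1) B" and C: "okset (length Q3 - 1) C"
    using assms unfolding okm_def by auto
  have x12: "\<forall>x\<in>pe Q1 ` A. \<forall>y\<in>pe Q2 ` B. x \<inter> y = {}"
    by (rule cross_img[OF ap1 ap2 ab i12 A B]) (use assms in \<open>simp_all add: okm_def\<close>)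
  have x13: "\<forall>x\<in>pe Q1 ` A. \<forall>y\<in>pe Q3 ` C. x \<inter> y = {}"
    by (rule cross_img[OF ap1 ap3 ab i13 A C]) (use assms in \<open>simp_all add: okm_def\<close>)
  have x23: "\<forall>x\<in>pe Q2 ` B. \<forall>y\<in>pe Q3 ` C. x \<inter> y = {}"
    by (rule cross_img[OF ap2 ap3 ab i23 B C]) (use assms in \<open>simp_all add: okm_def\<close>)
  show "pdisj (MM A B C)" unfolding MM_def
  proof (intro pdisj_Un pdisj_path[OF ap1 ab A] pdisj_path[OF ap2 ab B] pdisj_path[OF ap3 ab C])
    show "\<forall>x\<in>pe Q1 ` A. \<forall>y\<in>pe Q2 ` B. x \<inter> y = {}" by (rule x12)
    show "\<forall>x\<in>pe Q1 ` A \<union> pe Q2 ` B. \<forall>y\<in>pe Q3 ` C. x \<inter> y = {}"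
      using x13 x23 by blast
  qed
  show "card (MM A B C) = k"
    using card_MM[of A B C] A B C assms unfolding okset_def okm_def by auto
qed

lemma scheme_MM:
  assumes "scheme (length Q1 - 1) (length Q2 - 1) (length Q3 - 1) k"
  shows "\<exists>M1 M2 M3. pdisj M1 \<and> card M1 = k \<and> pdisj M2 \<and> card M2 = k \<and> pdisj M3 \<and> card M3 = k \<and>
     M1 \<union> M2 \<union> M3 = MM {..<length Q1 - 1} {..<length Q2 - 1} {..<length Q3 - 1}"
proof -
  obtain A1 B1 C1 A2 B2 C2 A3 B3 C3 where
    o1: "okm (length Q1 - 1) (length Q2 - 1) (length Q3 - 1) k A1 B1 C1" and
    o2: "okm (length Q1 - 1) (length Q2 - 1) (length Q3 - 1) k A2 B2 C2" and
    o3: "okm (length Q1 - 1) (length Q2 - 1) (length Q3 - 1) k A3 B3 C3" and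
    u: "A1 \<union> A2 \<union> A3 = {..<length Q1 - 1}" "B1 \<union> B2 \<union> B3 = {..<length Q2 - 1}"
       "C1 \<union> C2 \<union> C3 = {..<length Q3 - 1}"
    using assms unfolding scheme_def by blast
  have "MM A1 B1 C1 \<union> MM A2 B2 C2 \<union> MM A3 B3 C3 = MM (A1 \<union> A2 \<union> A3) (B1 \<union> B2 \<union> B3) (C1 \<union> C2 \<union> C3)"
    unfolding MM_def image_Un by (simp only: Un_ac)
  then have "MM A1 B1 C1 \<union> MM A2 B2 C2 \<union> MM A3 B3 C3 = MM {..<length Q1 - 1} {..<length Q2 - 1} {..<length Q3 - 1}"
    by (simp only: u)
  then show ?thesis using okm_MM[OF o1] okm_MM[OF o2] okm_MM[OF o3]
    by (intro exI[of _ "MM A1 B1 C1"] exI[of _ "MM A2 B2 C2"] exI[of _ "MM A3 B3 C3"]) simp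
qed

end




lemma interior_two:
  assumes apQ: "apath a b Q" and ab: "a \<noteq> b" and v: "v \<in> set Q" "v \<noteq> a" "v \<noteq> b"
  shows "\<exists>j1 j2. j1 < length Q - 1 \<and> j2 < length Q - 1 \<and> j1 \<noteq> j2 \<and> v \<in> pe Q j1 \<and> v \<in> pe Q j2"
proof -
  obtain j where j: "j < length Q" "Q!j = v" using v(1) by (auto simp: in_set_conv_nth)
  have "j \<noteq> 0" using ap_a[OF apQ ab j(1)] j v by auto
  moreover have "j \<noteq> length Q - 1" using ap_b[OF apQ ab j(1)] j v by auto
  ultimately have "j - 1 < length Q - 1" "j < length Q - 1" "j - 1 \<noteq> j" using j(1) by auto
  moreover have "v \<in> pe Q (j-1)" "v \<in> pe Q j" using j \<open>j \<noteq> 0\<close> by (auto simp: pe_def)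
  ultimately show ?thesis by blast
qed

lemma apath_of: "is_path E Q a b \<Longrightarrow> apath a b Q"
  by (auto simp: is_path_def apath_def)

lemma pe_in: "is_path E Q a b \<Longrightarrow> j < length Q - 1 \<Longrightarrow> pe Q j \<in> E"
  by (auto simp: is_path_def pe_def)

context theta begin

lemma two_edges:
  assumes v: "v \<in> set Q1 \<union> set Q2 \<union> set Q3"
  shows "\<exists>p1 p2. p1 \<in> MM {..<length Q1 - 1} {..<length Q2 - 1} {..<length Q3 - 1} \<and>
                 p2 \<in> MM {..<length Q1 - 1} {..<length Q2 - 1} {..<length Q3 - 1} \<and>
                 p1 \<noteq> p2 \<and> v \<in> p1 \<and> v \<in> p2"
proof -
  have l1: "length Q1 \<ge> 2" and l2: "length Q2 \<ge> 2" and l3: "length Q3 \<ge> 2"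
    using ap_len[OF ap1 ab] ap_len[OF ap2 ab] ap_len[OF ap3 ab] by auto
  show ?thesis
  proof (cases "v = a")
    case True
    have "pe Q1 0 \<noteq> pe Q2 0" using cross_neq[OF ap1 ap2 ab i12 n12, of 0 0] l1 l2 by auto
    moreover have "pe Q1 0 \<in> MM {..<length Q1 - 1} {..<length Q2 - 1} {..<length Q3 - 1}"
      "pe Q2 0 \<in> MM {..<length Q1 - 1} {..<length Q2 - 1} {..<length Q3 - 1}"
      using l1 l2 unfolding MM_def by auto
    ultimately show ?thesis using pe_a0[OF ap1 ab] pe_a0[OF ap2 ab] True
      by (intro exI[of _ "pe Q1 0"] exI[of _ "pe Q2 0"]) simp
  next
    case Fa: False
    show ?thesis
    proof (cases "v = b")
      case True
      have "pe Q1 (length Q1 - 2) \<noteq> pe Q2 (length Q2 - 2)"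
        using cross_neq[OF ap1 ap2 ab i12 n12, of "length Q1 - 2" "length Q2 - 2"] l1 l2 by auto
      moreover have "pe Q1 (length Q1 - 2) \<in> MM {..<length Q1 - 1} {..<length Q2 - 1} {..<length Q3 - 1}"
        "pe Q2 (length Q2 - 2) \<in> MM {..<length Q1 - 1} {..<length Q2 - 1} {..<length Q3 - 1}"
        using l1 l2 unfolding MM_def by auto
      ultimately show ?thesis using pe_bl[OF ap1 ab] pe_bl[OF ap2 ab] True
        by (intro exI[of _ "pe Q1 (length Q1 - 2)"] exI[of _ "pe Q2 (length Q2 - 2)"]) simp
    next
      case False
      from v consider "v \<in> set Q1" | "v \<in> set Q2" | "v \<in> set Q3" by blast
      then show ?thesis
      proof cases
        case 1
        then obtain j1 j2 where "j1 < length Q1 - 1" "j2 < length Q1 - 1" "j1 \<noteq> j2" "v \<in> pe Q1 j1" "v \<in> pe Q1 j2"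
          using interior_two[OF ap1 ab _ Fa False] by blast
        then have "pe Q1 j1 \<noteq> pe Q1 j2" "pe Q1 j1 \<in> MM {..<length Q1 - 1} {..<length Q2 - 1} {..<length Q3 - 1}"
           "pe Q1 j2 \<in> MM {..<length Q1 - 1} {..<length Q2 - 1} {..<length Q3 - 1}"
          using pe_inj[OF ap1 ab, of j1 j2] unfolding MM_def by auto
        then show ?thesis using \<open>v \<in> pe Q1 j1\<close> \<open>v \<in> pe Q1 j2\<close> by blast
      next
        case 2
        then obtain j1 j2 where "j1 < length Q2 - 1" "j2 < length Q2 - 1" "j1 \<noteq> j2" "v \<in> pe Q2 j1" "v \<in> pe Q2 j2"
          using interior_two[OF ap2 ab _ Fa False] by blast
        then have "pe Q2 j1 \<noteq> pe Q2 j2" "pe Q2 j1 \<in> MM {..<length Q1 - 1} {..<length Q2 - 1} {..<length Q3 - 1}"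
           "pe Q2 j2 \<in> MM {..<length Q1 - 1} {..<length Q2 - 1} {..<length Q3 - 1}"
          using pe_inj[OF ap2 ab, of j1 j2] unfolding MM_def by auto
        then show ?thesis using \<open>v \<in> pe Q2 j1\<close> \<open>v \<in> pe Q2 j2\<close> by blast
      next
        case 3
        then obtain j1 j2 where "j1 < length Q3 - 1" "j2 < length Q3 - 1" "j1 \<noteq> j2" "v \<in> pe Q3 j1" "v \<in> pe Q3 j2"
          using interior_two[OF ap3 ab _ Fa False] by blast
        then have "pe Q3 j1 \<noteq> pe Q3 j2" "pe Q3 j1 \<in> MM {..<length Q1 - 1} {..<length Q2 - 1} {..<length Q3 - 1}"
           "pe Q3 j2 \<in> MM {..<length Q1 - 1} {..<length Q2 - 1} {..<length Q3 - 1}"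
          using pe_inj[OF ap3 ab, of j1 j2] unfolding MM_def by auto
        then show ?thesis using \<open>v \<in> pe Q3 j1\<close> \<open>v \<in> pe Q3 j2\<close> by blast
      qed
    qed
  qed
qed

lemma card_V: "card (set Q1 \<union> set Q2 \<union> set Q3) + 4 = length Q1 + length Q2 + length Q3"
proof -
  have d: "card (set Q1) = length Q1" "card (set Q2) = length Q2" "card (set Q3) = length Q3"
    using ap_dist[OF ap1 ab] ap_dist[OF ap2 ab] ap_dist[OF ap3 ab] by (simp_all add: distinct_card)
  have c2: "card {a,b} = 2" using ab by simp
  have "card (set Q1 \<union> set Q2) + card (set Q1 \<inter> set Q2) = card (set Q1) + card (set Q2)"
    using card_Un_Int[of "set Q1" "set Q2"] by simp
  then have u12: "card (set Q1 \<union> set Q2) + 2 = length Q1 + length Q2" using d i12 c2 by simp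
  have "(set Q1 \<union> set Q2) \<inter> set Q3 = {a,b}" using i13 i23 by blast
  moreover have "card (set Q1 \<union> set Q2 \<union> set Q3) + card ((set Q1 \<union> set Q2) \<inter> set Q3) = card (set Q1 \<union> set Q2) + card (set Q3)"
    using card_Un_Int[of "set Q1 \<union> set Q2" "set Q3"] by simp
  ultimately show ?thesis using u12 d c2 by simp
qed

end

lemma handshake:
  assumes fV: "finite V" and EV: "\<forall>e\<in>E. \<exists>u v. e = {u,v} \<and> u \<noteq> v \<and> u \<in> V \<and> v \<in> V"
    and deg: "\<forall>v\<in>V. degree E v = 3"
  shows "2 * card E = 3 * card V"
proof -
  have sub: "E \<subseteq> Pow V"
  proof
    fix e assume "e \<in> E"
    then obtain u w where "e = {u,w}" "u \<in> V" "w \<in> V" using EV by blast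
    then show "e \<in> Pow V" by simp
  qed
  then have fE: "finite E" using fV by (meson finite_Pow_iff finite_subset)
  have "(\<Sum>v\<in>V. degree E v) = (\<Sum>v\<in>V. \<Sum>e\<in>E. if v \<in> e then 1 else 0)"
  proof (rule sum.cong)
    fix v assume "v \<in> V"
    have "degree E v = card {e\<in>E. v \<in> e}" by (simp add: degree_def)
    also have "\<dots> = (\<Sum>e\<in>{e\<in>E. v \<in> e}. 1)" by simp
    also have "\<dots> = (\<Sum>e\<in>E. if v \<in> e then 1 else 0)" using fE by (rule sum.inter_filter)
    finally show "degree E v = (\<Sum>e\<in>E. if v \<in> e then 1 else 0)" .
  qed simp
  also have "\<dots> = (\<Sum>e\<in>E. \<Sum>v\<in>V. if v \<in> e then 1 else 0)" by (rule sum.swap)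
  also have "\<dots> = (\<Sum>e\<in>E. 2)"
  proof (rule sum.cong)
    fix e assume e: "e \<in> E"
    then obtain u w where uw: "e = {u,w}" "u \<noteq> w" "u \<in> V" "w \<in> V" using EV by blast
    have "(\<Sum>v\<in>V. if v \<in> e then 1 else 0) = (\<Sum>v\<in>{v\<in>V. v \<in> e}. (1::nat))"
      using fV by (rule sum.inter_filter[symmetric])
    also have "{v\<in>V. v \<in> e} = {u,w}" using uw by auto
    finally show "(\<Sum>v\<in>V. if v \<in> e then 1 else 0) = (2::nat)" using uw by simp
  qed simp
  finally have "(\<Sum>v\<in>V. degree E v) = 2 * card E" by simp
  moreover have "(\<Sum>v\<in>V. degree E v) = 3 * card V" using deg by simp
  ultimately show ?thesis by simp
qed




theorem proposition8:
  fixes V :: "'a set" and E :: "'a set set" and n :: nat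
  assumes "cubic V E" and "connected_graph V E" and "three_star_connected V E"
    and "card V = 2 * n" and "n \<ge> 4"
  shows "excessive_index E (n - 1) = 4"
proof -
  note cub = assms(1) and ts = assms(3) and cV = assms(4) and n4 = assms(5)
  obtain a b Q1 Q2 Q3 where ab: "a \<noteq> b" and
    p1: "is_path E Q1 a b" and p2: "is_path E Q2 a b" and p3: "is_path E Q3 a b" and
    n12: "Q1 \<noteq> Q2" and n13: "Q1 \<noteq> Q3" and n23: "Q2 \<noteq> Q3" and
    i12: "set Q1 \<inter> set Q2 = {a,b}" and i13: "set Q1 \<inter> set Q3 = {a,b}" and
    i23: "set Q2 \<inter> set Q3 = {a,b}" and VQ: "V = set Q1 \<union> set Q2 \<union> set Q3"
    using ts unfolding three_star_connected_def by blast
  have fV: "finite V" and EV: "\<forall>e\<in>E. \<exists>u v. e = {u,v} \<and> u \<noteq> v \<and> u \<in> V \<and> v \<in> V"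
    and deg: "\<forall>v\<in>V. degree E v = 3"
    using cub unfolding cubic_def simple_graph_def by auto
  have sub: "E \<subseteq> Pow V"
  proof
    fix e assume "e \<in> E"
    then obtain u w where "e = {u,w}" "u \<in> V" "w \<in> V" using EV by blast
    then show "e \<in> Pow V" by simp
  qed
  then have fE: "finite E" using fV by (meson finite_Pow_iff finite_subset)
  have cE: "card E = 3 * n" using handshake[OF fV EV deg] cV by simp
  have ap1: "apath a b Q1" and ap2: "apath a b Q2" and ap3: "apath a b Q3"
    using apath_of[OF p1] apath_of[OF p2] apath_of[OF p3] by auto
  interpret th: theta a b Q1 Q2 Q3
    by unfold_locales (use ab ap1 ap2 ap3 i12 i13 i23 n12 n13 n23 in auto)
  define l1 where "l1 = length Q1 - 1"
  define l2 where "l2 = length Q2 - 1"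
  define l3 where "l3 = length Q3 - 1"
  have L: "length Q1 \<ge> 2" "length Q2 \<ge> 2" "length Q3 \<ge> 2"
    using ap_len[OF ap1 ab] ap_len[OF ap2 ab] ap_len[OF ap3 ab] by auto
  have sum: "l1 + l2 + l3 = 2*n+1" using th.card_V VQ cV L unfolding l1_def l2_def l3_def by simp
  have l1ge: "l1 \<ge> 1" "l2 \<ge> 1" "l3 \<ge> 1" using L unfolding l1_def l2_def l3_def by auto
  have one: "Q = [a,b]" if "length Q - 1 = 1" "apath a b Q" for Q
  proof -
    have "length Q = 2" using that(1) by arith
    then show ?thesis by (rule len2[OF that(2) ab])
  qed
  have c1: "\<not>(l1 = 1 \<and> l2 = 1)" using one[of Q1] one[of Q2] n12 ap1 ap2 unfolding l1_def l2_def by auto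
  have c2: "\<not>(l1 = 1 \<and> l3 = 1)" using one[of Q1] one[of Q3] n13 ap1 ap3 unfolding l1_def l3_def by auto
  have c3: "\<not>(l2 = 1 \<and> l3 = 1)" using one[of Q2] one[of Q3] n23 ap2 ap3 unfolding l2_def l3_def by auto
  have sch: "scheme l1 l2 l3 (n-1)" by (rule arith_main[OF l1ge sum n4 c1 c2 c3])
  define P where "P = th.MM {..<l1} {..<l2} {..<l3}"
  obtain M1 M2 M3 where M: "pdisj M1" "card M1 = n-1" "pdisj M2" "card M2 = n-1"
     "pdisj M3" "card M3 = n-1" and U: "M1 \<union> M2 \<union> M3 = P"
    using th.scheme_MM[of "n-1"] sch unfolding P_def l1_def l2_def l3_def by blast
  have PE: "P \<subseteq> E"
    unfolding P_def th.MM_def l1_def l2_def l3_def using pe_in[OF p1] pe_in[OF p2] pe_in[OF p3] by auto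
  have cP: "card P = 2*n+1"
    unfolding P_def using th.card_MM[of "{..<l1}" "{..<l2}" "{..<l3}"] sum
    unfolding l1_def l2_def l3_def by simp
  define M0 where "M0 = E - P"
  have "card M0 = card E - card P" unfolding M0_def
    using card_Diff_subset[OF finite_subset[OF PE fE] PE] .
  then have cM0: "card M0 = n - 1" using cE cP by arith
  have dM0: "pdisj M0"
    unfolding pdisj_def
  proof (intro ballI impI)
    fix e1 e2 assume e1: "e1 \<in> M0" and e2: "e2 \<in> M0" and ne: "e1 \<noteq> e2"
    show "e1 \<inter> e2 = {}"
    proof (rule ccontr)
      assume "e1 \<inter> e2 \<noteq> {}"
      then obtain v where v: "v \<in> e1" "v \<in> e2" by blast
      have "e1 \<in> E" using e1 M0_def by auto
      then have vV: "v \<in> V" using sub v by auto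
      obtain q1 q2 where q: "q1 \<in> P" "q2 \<in> P" "q1 \<noteq> q2" "v \<in> q1" "v \<in> q2"
        using th.two_edges[of v] vV VQ unfolding P_def l1_def l2_def l3_def by blast
      have "e1 \<notin> P" "e2 \<notin> P" using e1 e2 M0_def by auto
      then have d: "q1 \<noteq> e1" "q1 \<noteq> e2" "q2 \<noteq> e1" "q2 \<noteq> e2" using q by auto
      have "card {q1,q2,e1,e2} = 4" using d q(3) ne by simp
      moreover have "{q1,q2,e1,e2} \<subseteq> {e\<in>E. v \<in> e}" using q v e1 e2 PE M0_def by auto
      moreover have "finite {e\<in>E. v \<in> e}" using fE by simp
      ultimately have "4 \<le> card {e\<in>E. v \<in> e}" by (metis card_mono)
      then show False using deg vV unfolding degree_def by simp
    qed
  qed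
  define S where "S = {M0, M1, M2, M3}"
  have kS: "\<forall>M\<in>S. k_matching E (n-1) M"
    unfolding S_def k_matching_def matching_def using M cM0 dM0 U PE M0_def
    unfolding pdisj_def by auto
  have uS: "\<Union>S = E" unfolding S_def using U PE M0_def by auto
  have fS: "finite S" unfolding S_def by simp
  have lower: "card T \<ge> 4" if T: "finite T" "\<forall>M\<in>T. k_matching E (n-1) M" "\<Union>T = E" for T
  proof (rule ccontr)
    assume "\<not> card T \<ge> 4"
    then have "card T \<le> 3" by simp
    have "card E \<le> sum card T" using card_Union_le_sum_card[of T] T(3) by simp
    also have "\<dots> = card T * (n-1)" using T(2) unfolding k_matching_def by simp
    also have "\<dots> \<le> 3 * (n-1)" using \<open>card T \<le> 3\<close> by (rule mult_le_mono1)
    finally show False using cE n4 by simp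
  qed
  have cS: "card S = 4"
  proof -
    have "card (set [M0,M1,M2,M3]) \<le> length [M0,M1,M2,M3]" by (rule card_length)
    then have "card S \<le> 4" unfolding S_def by simp
    then show ?thesis using lower[OF fS kS uS] by simp
  qed
  let ?X = "{enat (card S) | S. finite S \<and> (\<forall>M\<in>S. k_matching E (n-1) M) \<and> \<Union>S = E}"
  have "enat (card S) \<in> ?X" using fS kS uS by blast
  then have mem: "4 \<in> ?X" using cS by (simp add: numeral_eq_enat)
  have low: "\<forall>x\<in>?X. 4 \<le> x"
  proof
    fix x assume "x \<in> ?X"
    then obtain T where T: "x = enat (card T)" "finite T" "\<forall>M\<in>T. k_matching E (n-1) M" "\<Union>T = E"
      by blast
    have "4 \<le> card T" using lower[OF T(2-4)] .
    then show "4 \<le> x" using T(1) by (simp add: numeral_eq_enat)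
  qed
  have "Inf ?X = 4"
  proof (rule order_antisym)
    show "Inf ?X \<le> 4" using mem by (rule Inf_lower)
    show "4 \<le> Inf ?X" using low by (intro Inf_greatest) blast
  qed
  then show ?thesis unfolding excessive_index_def by simp
qed


end
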